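(* Let $M$ be a binary matroid. Then $P(M)$ has no nontrivial hyperplane split.
   Context: A matroid is binary if it is representable over $\mathbb{F}_2$. For a matroid $N$ on $E=\{1,\dots,n\}$, $P(N)=\mathrm{conv}\{\sum_{i\in B}e_i : B \text{ a base of } N\}\subset\mathbb{R}^n$. A hyperplane split of $P(N)$ is an expression $P(N)=P(N_1)\cup P(N_2)$ with $N_1,N_2$ matroids on $E$ such that $P(N_1)\cap P(N_2)$ is a face of both $P(N_1)$ and $P(N_2)$; it is nontrivial if $P(N_1)\neq P(N)$ and $P(N_2)\neq P(N)$. *)

theory Defs
  imports "HOL-Analysis.Analysis" "HOL-Library.Z2"
begin

text \<open>A matroid on the finite ground set UNIV of the finite type 'n, given by its set of bases
  (base axioms: nonempty, basis exchange).\<close>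
definition matroid_bases :: "'n::finite set set \<Rightarrow> bool" where
  "matroid_bases \<B> \<longleftrightarrow> \<B> \<noteq> {} \<and>
     (\<forall>B1\<in>\<B>. \<forall>B2\<in>\<B>. \<forall>x\<in>B1 - B2. \<exists>y\<in>B2 - B1. insert y (B1 - {x}) \<in> \<B>)"

text \<open>Linear independence over GF(2) of the columns indexed by S of a matrix A
  (column e is the vector i \<mapsto> A e i).\<close>
definition gf2_indep :: "('n \<Rightarrow> nat \<Rightarrow> bit) \<Rightarrow> 'n set \<Rightarrow> bool" where
  "gf2_indep A S \<longleftrightarrow>
     (\<forall>c :: 'n \<Rightarrow> bit. (\<forall>i. (\<Sum>e\<in>S. c e * A e i) = 0) \<longrightarrow> (\<forall>e\<in>S. c e = 0))"

definition binary_matroid :: "'n::finite set set \<Rightarrow> bool" where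
  "binary_matroid \<B> \<longleftrightarrow> (\<exists>A :: 'n \<Rightarrow> nat \<Rightarrow> bit.
     \<B> = {S. gf2_indep A S \<and> (\<forall>e. gf2_indep A (insert e S) \<longrightarrow> e \<in> S)})"

definition base_polytope :: "'n::finite set set \<Rightarrow> (real ^ 'n) set" where
  "base_polytope \<B> = convex hull ((\<lambda>B. \<chi> i. if i \<in> B then 1 else 0) ` \<B>)"

definition hyperplane_split :: "'n::finite set set \<Rightarrow> 'n set set \<Rightarrow> 'n set set \<Rightarrow> bool" where
  "hyperplane_split \<B> \<B>1 \<B>2 \<longleftrightarrow> matroid_bases \<B>1 \<and> matroid_bases \<B>2 \<and>
     base_polytope \<B> = base_polytope \<B>1 \<union> base_polytope \<B>2 \<and>
     (base_polytope \<B>1 \<inter> base_polytope \<B>2) face_of base_polytope \<B>1 \<and>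
     (base_polytope \<B>1 \<inter> base_polytope \<B>2) face_of base_polytope \<B>2"

definition nontrivial_hyperplane_split :: "'n::finite set set \<Rightarrow> 'n set set \<Rightarrow> 'n set set \<Rightarrow> bool" where
  "nontrivial_hyperplane_split \<B> \<B>1 \<B>2 \<longleftrightarrow> hyperplane_split \<B> \<B>1 \<B>2 \<and>
     base_polytope \<B>1 \<noteq> base_polytope \<B> \<and> base_polytope \<B>2 \<noteq> base_polytope \<B>"

end

theory Submission
  imports Defs
begin

definition ind :: "'n::finite set \<Rightarrow> real ^ 'n" where
  "ind S = (\<chi> i. if i \<in> S then 1 else 0)"

lemma bp_ind: "base_polytope \<B> = convex hull (ind ` \<B>)"
  unfolding base_polytope_def ind_def by simp

lemma hull_pick:
  fixes \<B> :: "'n::finite set set"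
  assumes p: "p \<in> convex hull (ind ` \<B>)"
  shows "\<exists>T\<in>\<B>. (\<forall>i. p$i = 0 \<longrightarrow> i \<notin> T) \<and> (\<forall>i. p$i = 1 \<longrightarrow> i \<in> T) \<and> (p$i0 > 0 \<longrightarrow> i0 \<in> T)"
proof -
  let ?s = "ind ` \<B>"
  have fin: "finite ?s" by simp
  obtain u where u0: "\<forall>x\<in>?s. 0 \<le> u x" and u1: "sum u ?s = 1" and us: "(\<Sum>x\<in>?s. u x *\<^sub>R x) = p"
    using p convex_hull_finite[OF fin] by auto
  have comp: "p$i = (\<Sum>x\<in>?s. u x * x$i)" for i
    using us[symmetric] by simp
  have x01: "x$i = 0 \<or> x$i = 1" if "x \<in> ?s" for x i
    using that by (auto simp: ind_def)
  have nn: "0 \<le> u x * x$i" if "x \<in> ?s" for x i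
    using u0 that x01[OF that, of i] by auto
  have nn2: "0 \<le> u x * (1 - x$i)" if "x \<in> ?s" for x i
    using u0 that x01[OF that, of i] by auto
  have Z: "u x * x$i = 0" if "x \<in> ?s" "p$i = 0" for x i
  proof -
    have "(\<Sum>x\<in>?s. u x * x$i) = 0" using comp that(2) by simp
    then show ?thesis using sum_nonneg_eq_0_iff[OF fin, of "\<lambda>x. u x * x$i"] nn that(1) by auto
  qed
  have O: "u x * (1 - x$i) = 0" if "x \<in> ?s" "p$i = 1" for x i
  proof -
    have "(\<Sum>x\<in>?s. u x * (1 - x$i)) = sum u ?s - (\<Sum>x\<in>?s. u x * x$i)"
      by (simp add: algebra_simps sum_subtractf)
    also have "\<dots> = 0" using comp[of i] that(2) u1 by simp
    finally show ?thesis using sum_nonneg_eq_0_iff[OF fin, of "\<lambda>x. u x * (1 - x$i)"] nn2 that(1) by auto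
  qed
  obtain x where xs: "x \<in> ?s" and ux: "u x > 0" and xi0: "p$i0 > 0 \<longrightarrow> x$i0 = 1"
  proof (cases "p$i0 > 0")
    case True
    then have "(\<Sum>x\<in>?s. u x * x$i0) \<noteq> 0" using comp by simp
    then obtain x where x: "x \<in> ?s" "u x * x$i0 \<noteq> 0" using sum.not_neutral_contains_not_neutral by blast
    then have "u x \<noteq> 0" "x$i0 = 1" using x01[OF x(1), of i0] by auto
    moreover have "u x \<ge> 0" using u0 x(1) by blast
    ultimately show ?thesis using that x(1) by simp
  next
    case False
    have "sum u ?s \<noteq> 0" using u1 by simp
    then obtain x where x: "x \<in> ?s" "u x \<noteq> 0" using sum.not_neutral_contains_not_neutral by blast
    moreover have "u x \<ge> 0" using u0 x(1) by blast
    ultimately show ?thesis using that False by simp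
  qed
  obtain T where T: "T \<in> \<B>" "x = ind T" using xs by blast
  show ?thesis
  proof (intro bexI[OF _ T(1)] conjI allI impI)
    fix i assume "p$i = 0"
    then have "u x * x$i = 0" using Z[OF xs] by blast
    then have "x$i = 0" using ux by simp
    then show "i \<notin> T" using T(2) by (simp add: ind_def split: if_splits)
  next
    fix i assume "p$i = 1"
    then have "u x * (1 - x$i) = 0" using O[OF xs] by blast
    then have "x$i = 1" using ux by simp
    then show "i \<in> T" using T(2) by (simp add: ind_def split: if_splits)
  next
    assume "p$i0 > 0" then show "i0 \<in> T" using xi0 T(2) by (auto simp: ind_def split: if_splits)
  qed
qed

lemma antichain:
  assumes "matroid_bases \<B>" "X \<in> \<B>" "W \<in> \<B>" "X \<subseteq> W"
  shows "X = W"
proof (rule ccontr)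
  assume "X \<noteq> W"
  then obtain w where "w \<in> W - X" using assms(4) by blast
  then obtain y where "y \<in> X - W" using assms(1-3) unfolding matroid_bases_def by blast
  then show False using assms(4) by blast
qed

lemma exch:
  assumes "matroid_bases \<B>" "B1 \<in> \<B>" "B2 \<in> \<B>" "x \<in> B1 - B2"
  shows "\<exists>y\<in>B2 - B1. insert y (B1 - {x}) \<in> \<B>"
  using assms unfolding matroid_bases_def by blast

lemma rep:
  fixes A :: "'n::finite \<Rightarrow> nat \<Rightarrow> bit"
  assumes B: "\<B> = {S. gf2_indep A S \<and> (\<forall>e. gf2_indep A (insert e S) \<longrightarrow> e \<in> S)}"
    and X: "X \<in> \<B>" and y: "y \<notin> X"
  shows "\<exists>cc. cc y = 1 \<and> (\<forall>e. e \<notin> insert y X \<longrightarrow> cc e = 0) \<and>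
     (\<forall>i. (\<Sum>e\<in>UNIV. cc e * A e i) = 0) \<and>
     (\<forall>x\<in>X. gf2_indep A (insert y (X - {x})) \<longrightarrow> cc x = 1)"
proof -
  have iX: "gf2_indep A X" using X B by auto
  have "\<not> gf2_indep A (insert y X)" using X B y by auto
  then obtain c where c0: "\<forall>i. (\<Sum>e\<in>insert y X. c e * A e i) = 0" and cne: "\<exists>e\<in>insert y X. c e \<noteq> 0"
    unfolding gf2_indep_def by blast
  have split: "(\<Sum>e\<in>insert y X. c e * A e i) = c y * A y i + (\<Sum>e\<in>X. c e * A e i)" for i
    using y by (intro sum.insert) simp_all
  have cy: "c y = 1"
  proof (rule ccontr)
    assume "c y \<noteq> 1"
    then have "c y = 0" by simp
    then have "\<forall>i. (\<Sum>e\<in>X. c e * A e i) = 0" using c0 split by simp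
    then have "\<forall>e\<in>X. c e = 0" using iX unfolding gf2_indep_def by blast
    then show False using cne \<open>c y = 0\<close> by auto
  qed
  define cc where "cc e = (if e \<in> insert y X then c e else 0)" for e
  have "(\<Sum>e\<in>UNIV. cc e * A e i) = (\<Sum>e\<in>insert y X. c e * A e i)" for i
  proof -
    have "(\<Sum>e\<in>UNIV. cc e * A e i) = (\<Sum>e\<in>insert y X. cc e * A e i)"
      by (rule sum.mono_neutral_right) (auto simp: cc_def)
    also have "\<dots> = (\<Sum>e\<in>insert y X. c e * A e i)"
      by (rule sum.cong) (auto simp: cc_def)
    finally show ?thesis .
  qed
  then have s0: "\<forall>i. (\<Sum>e\<in>UNIV. cc e * A e i) = 0" using c0 by simp
  have coef: "cc x = 1" if x: "x \<in> X" and ind: "gf2_indep A (insert y (X - {x}))" for x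
  proof (rule ccontr)
    assume "cc x \<noteq> 1"
    then have cx: "c x = 0" using x unfolding cc_def by simp
    have "(\<Sum>e\<in>insert y (X - {x}). c e * A e i) = (\<Sum>e\<in>insert y X. c e * A e i)" for i
    proof -
      have "insert y X = insert x (insert y (X - {x}))" using x by auto
      moreover have "y \<noteq> x" "x \<notin> insert y (X - {x})" using x y by auto
      moreover have "(\<Sum>e\<in>insert x (insert y (X - {x})). c e * A e i) = c x * A x i + (\<Sum>e\<in>insert y (X - {x}). c e * A e i)"
        by (rule sum.insert) (use x y in auto)
      ultimately show ?thesis using cx by (simp only: mult_zero_left add_0)
    qed
    then have "\<forall>i. (\<Sum>e\<in>insert y (X - {x}). c e * A e i) = 0" using c0 by simp
    then have "c y = 0" using ind unfolding gf2_indep_def by blast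
    then show False using cy by simp
  qed
  show ?thesis
    by (rule exI[of _ cc]) (use cy s0 coef in \<open>auto simp: cc_def\<close>)
qed

lemma LA:
  fixes A :: "'n::finite \<Rightarrow> nat \<Rightarrow> bit"
  assumes B: "\<B> = {S. gf2_indep A S \<and> (\<forall>e. gf2_indep A (insert e S) \<longrightarrow> e \<in> S)}"
    and X: "X \<in> \<B>" and Y: "Y \<in> \<B>" and y0: "y0 \<in> Y - X" and w: "w \<in> Y - X" and ne: "y0 \<noteq> w"
    and nb: "\<forall>x\<in>X - Y. insert y0 (X - {x}) \<in> \<B> \<and> insert w (X - {x}) \<in> \<B>"
  shows False
proof -
  obtain c where c1: "c y0 = 1" and cz: "\<forall>e. e \<notin> insert y0 X \<longrightarrow> c e = 0"
    and cs: "\<forall>i. (\<Sum>e\<in>UNIV. c e * A e i) = 0"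
    and cx: "\<forall>x\<in>X. gf2_indep A (insert y0 (X - {x})) \<longrightarrow> c x = 1"
    using rep[OF B X, of y0] y0 by blast
  obtain c' where c'1: "c' w = 1" and c'z: "\<forall>e. e \<notin> insert w X \<longrightarrow> c' e = 0"
    and c's: "\<forall>i. (\<Sum>e\<in>UNIV. c' e * A e i) = 0"
    and c'x: "\<forall>x\<in>X. gf2_indep A (insert w (X - {x})) \<longrightarrow> c' x = 1"
    using rep[OF B X, of w] w by blast
  define d where "d e = c e + c' e" for e
  have dz: "d e = 0" if "e \<notin> Y" for e
  proof (cases "e \<in> X")
    case True
    then have "e \<in> X - Y" using that by simp
    then have "c e = 1" "c' e = 1" using nb cx c'x B True by auto
    then show ?thesis unfolding d_def by simp
  next
    case False
    then show ?thesis using cz c'z that y0 w unfolding d_def by auto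
  qed
  have "\<forall>i. (\<Sum>e\<in>Y. d e * A e i) = 0"
  proof
    fix i
    have "(\<Sum>e\<in>Y. d e * A e i) = (\<Sum>e\<in>UNIV. d e * A e i)"
      by (rule sum.mono_neutral_left) (use dz in auto)
    also have "\<dots> = (\<Sum>e\<in>UNIV. c e * A e i) + (\<Sum>e\<in>UNIV. c' e * A e i)"
      unfolding d_def by (simp only: distrib_right sum.distrib)
    also have "\<dots> = 0" using cs c's by simp
    finally show "(\<Sum>e\<in>Y. d e * A e i) = 0" .
  qed
  then have "d y0 = 0" using Y B y0 unfolding gf2_indep_def by blast
  moreover have "c' y0 = 0" using c'z y0 ne by auto
  ultimately show False using c1 unfolding d_def by simp
qed

theorem theorem3:
  fixes \<B> :: "'n::finite set set"
  assumes "matroid_bases \<B>" and "binary_matroid \<B>"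
  shows "\<not> (\<exists>\<B>1 \<B>2. nontrivial_hyperplane_split \<B> \<B>1 \<B>2)"
proof
  assume "\<exists>\<B>1 \<B>2. nontrivial_hyperplane_split \<B> \<B>1 \<B>2"
  then obtain \<B>1 \<B>2 where mb1: "matroid_bases \<B>1" and mb2: "matroid_bases \<B>2"
    and PU: "convex hull (ind ` \<B>) = convex hull (ind ` \<B>1) \<union> convex hull (ind ` \<B>2)"
    and n1: "convex hull (ind ` \<B>1) \<noteq> convex hull (ind ` \<B>)"
    and n2: "convex hull (ind ` \<B>2) \<noteq> convex hull (ind ` \<B>)"
    unfolding nontrivial_hyperplane_split_def hyperplane_split_def bp_ind by blast
  obtain A where Bdef: "\<B> = {S. gf2_indep A S \<and> (\<forall>e. gf2_indep A (insert e S) \<longrightarrow> e \<in> S)}"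
    using assms(2) unfolding binary_matroid_def by blast
  note mB = assms(1)
  have indc: "ind S $ i = (if i \<in> S then 1 else 0)" for S and i :: 'n
    by (simp add: ind_def)
  have memhull: "S \<in> \<C>" if hS: "ind S \<in> convex hull (ind ` \<C>)" for S :: "'n set" and \<C>
  proof -
    obtain T where T: "T \<in> \<C>" "\<forall>i. ind S $ i = 0 \<longrightarrow> i \<notin> T" "\<forall>i. ind S $ i = 1 \<longrightarrow> i \<in> T"
      using hull_pick[OF hS] by blast
    have "T = S" using T(2,3) by (auto simp: indc split: if_splits)
    then show ?thesis using T(1) by simp
  qed
  have sub1: "\<B>1 \<subseteq> \<B>"
  proof
    fix S assume "S \<in> \<B>1"
    then have "ind S \<in> convex hull (ind ` \<B>1)" by (simp add: hull_inc)
    then show "S \<in> \<B>" using PU memhull by blast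
  qed
  have sub2: "\<B>2 \<subseteq> \<B>"
  proof
    fix S assume "S \<in> \<B>2"
    then have "ind S \<in> convex hull (ind ` \<B>2)" by (simp add: hull_inc)
    then show "S \<in> \<B>" using PU memhull by blast
  qed
  have cov: "\<B> \<subseteq> \<B>1 \<union> \<B>2"
  proof
    fix S assume "S \<in> \<B>"
    then have "ind S \<in> convex hull (ind ` \<B>)" by (simp add: hull_inc)
    then show "S \<in> \<B>1 \<union> \<B>2" using PU memhull by blast
  qed
  obtain X0 where X0: "X0 \<in> \<B>2" "X0 \<notin> \<B>1"
  proof -
    have "\<B>1 \<noteq> \<B>" using n1 by blast
    then obtain X0 where "X0 \<in> \<B>" "X0 \<notin> \<B>1" using sub1 by blast
    then show ?thesis using that cov by blast
  qed
  obtain Y0 where Y0: "Y0 \<in> \<B>1" "Y0 \<notin> \<B>2"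
  proof -
    have "\<B>2 \<noteq> \<B>" using n2 by blast
    then obtain Y0 where "Y0 \<in> \<B>" "Y0 \<notin> \<B>2" using sub2 by blast
    then show ?thesis using that cov by blast
  qed
  define Q where "Q = (\<lambda>(X::'n set, Y::'n set). X \<in> \<B>2 \<and> X \<notin> \<B>1 \<and> Y \<in> \<B>1 \<and> Y \<notin> \<B>2)"
  define dd where "dd = (\<lambda>(X::'n set, Y::'n set). card (X - Y) + card (Y - X))"
  have "Q (X0, Y0)" using X0 Y0 by (simp add: Q_def)
  from ex_has_least_nat[of Q, OF this, of dd] obtain q where q: "Q q" "\<forall>q'. Q q' \<longrightarrow> dd q \<le> dd q'"
    by blast
  obtain X Y where qXY: "q = (X, Y)" by (cases q)
  have X: "X \<in> \<B>2" "X \<notin> \<B>1" and Y: "Y \<in> \<B>1" "Y \<notin> \<B>2" using q(1) qXY by (auto simp: Q_def)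
  have minim: "card (X - Y) + card (Y - X) \<le> card (X' - Y) + card (Y - X')" if "X' \<in> \<B>2" "X' \<notin> \<B>1" for X'
    using q(2)[rule_format, of "(X', Y)"] that Y qXY by (simp add: Q_def dd_def)
  have XB: "X \<in> \<B>" and YB: "Y \<in> \<B>" using X Y sub1 sub2 by auto
  have Dne: "X - Y \<noteq> {}"
  proof
    assume "X - Y = {}"
    then have "X = Y" using antichain[OF mB XB YB] by blast
    then show False using X Y by simp
  qed
  have Ene: "Y - X \<noteq> {}"
  proof
    assume "Y - X = {}"
    then have "Y = X" using antichain[OF mB YB XB] by blast
    then show False using X Y by simp
  qed
  show False
  proof (cases "card (X - Y) = 1")
    case True
    then obtain x where x: "X - Y = {x}" by (rule card_1_singletonE)
    obtain y where y: "y \<in> Y - X" and Wb: "insert y (X - {x}) \<in> \<B>"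
      using exch[OF mB XB YB, of x] x by blast
    have "insert y (X - {x}) \<subseteq> Y" using x y by blast
    then have YW: "Y = insert y (X - {x})" using antichain[OF mB Wb YB] by simp
    define m where "m = (1/2::real) *\<^sub>R ind X + (1/2::real) *\<^sub>R ind Y"
    have "m \<in> convex hull (ind ` \<B>)"
      unfolding m_def
      by (rule convexD[OF convex_convex_hull]) (use XB YB in \<open>auto simp: hull_inc\<close>)
    then have mU: "m \<in> convex hull (ind ` \<B>1) \<union> convex hull (ind ` \<B>2)" using PU by simp
    have mc: "m $ i = (if i \<in> X then 1/2 else 0) + (if i \<in> Y then 1/2 else 0)" for i
      by (simp add: m_def indc)
    show False
    proof (cases "m \<in> convex hull (ind ` \<B>1)")
      case True
      obtain T where T: "T \<in> \<B>1" "\<forall>i. m $ i = 1 \<longrightarrow> i \<in> T" "m $ x > 0 \<longrightarrow> x \<in> T"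
        using hull_pick[OF True, of x] by blast
      have "m $ x > 0" using x mc[of x] by auto
      then have "x \<in> T" using T by blast
      moreover have "X \<inter> Y \<subseteq> T"
      proof
        fix i assume "i \<in> X \<inter> Y"
        then have "m $ i = 1" using mc[of i] by simp
        then show "i \<in> T" using T(2) by blast
      qed
      ultimately have "X \<subseteq> T"
      proof (intro subsetI)
        fix i assume xT: "x \<in> T" and XYT: "X \<inter> Y \<subseteq> T" and iX: "i \<in> X"
        show "i \<in> T"
        proof (cases "i \<in> Y")
          case True then show ?thesis using iX XYT by blast
        next
          case False then have "i \<in> X - Y" using iX by simp
          then have "i = x" using x by simp
          then show ?thesis using xT by simp
        qed
      qed
      then have "X = T" using antichain[OF mB XB] T(1) sub1 by blast
      then show False using X T by simp
    next
      case False
      then have m2: "m \<in> convex hull (ind ` \<B>2)" using mU by blast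
      obtain T where T: "T \<in> \<B>2" "\<forall>i. m $ i = 1 \<longrightarrow> i \<in> T" "m $ y > 0 \<longrightarrow> y \<in> T"
        using hull_pick[OF m2, of y] by blast
      have "m $ y > 0" using y mc[of y] by auto
      then have "y \<in> T" using T by blast
      moreover have "X \<inter> Y \<subseteq> T"
      proof
        fix i assume "i \<in> X \<inter> Y"
        then have "m $ i = 1" using mc[of i] by simp
        then show "i \<in> T" using T(2) by blast
      qed
      ultimately have "Y \<subseteq> T"
      proof (intro subsetI)
        fix i assume yT: "y \<in> T" and XYT: "X \<inter> Y \<subseteq> T" and iY: "i \<in> Y"
        show "i \<in> T"
        proof (cases "i = y")
          case True then show ?thesis using yT by simp
        next
          case False then have "i \<in> X \<inter> Y" using iY YW by auto
          then show ?thesis using XYT by blast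
        qed
      qed
      then have "Y = T" using antichain[OF mB YB] T(1) sub2 by blast
      then show False using Y T by simp
    qed
  next
    case False
    have "card (X - Y) > 0" using Dne by (simp add: card_gt_0_iff)
    then have D2: "card (X - Y) \<ge> 2" using False by linarith
    define N where "N x y = insert y (X - {x})" for x y
    have nbr: "N x y \<in> \<B>1" if x: "x \<in> X - Y" and y: "y \<in> Y - X" and NB: "N x y \<in> \<B>" for x y
    proof (rule ccontr)
      assume "N x y \<notin> \<B>1"
      then have "N x y \<in> \<B>2" using cov NB by blast
      from minim[OF this \<open>N x y \<notin> \<B>1\<close>]
      have le: "card (X - Y) + card (Y - X) \<le> card (N x y - Y) + card (Y - N x y)" .
      have "N x y - Y = (X - Y) - {x}" using y unfolding N_def by blast
      moreover have "Y - N x y = (Y - X) - {y}" using x unfolding N_def by blast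
      ultimately have "card (N x y - Y) + card (Y - N x y) = (card (X - Y) - 1) + (card (Y - X) - 1)"
        using x y by simp
      moreover have "card (X - Y) \<ge> 1" "card (Y - X) \<ge> 1" using Dne Ene
        by (simp_all add: Suc_le_eq card_gt_0_iff)
      ultimately show False using le by linarith
    qed
    have noconf: False if x: "x \<in> X - Y" and x': "x' \<in> X - Y" and xx: "x \<noteq> x'"
      and y: "y \<in> Y - X" and y': "y' \<in> Y - X" and yy: "y \<noteq> y'"
      and b1: "N x y \<in> \<B>" and b2: "N x' y' \<in> \<B>" and b3: "N x y' \<notin> \<B>" for x x' y y'
    proof -
      have W1: "N x y \<in> \<B>1" using nbr x y b1 by blast
      have W2: "N x' y' \<in> \<B>1" using nbr x' y' b2 by blast
      have "y \<in> N x y - N x' y'" using y yy unfolding N_def by blast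
      from exch[OF mb1 W1 W2 this] obtain f where f: "f \<in> N x' y' - N x y"
        and fB: "insert f (N x y - {y}) \<in> \<B>1" by blast
      have e1: "N x y - {y} = X - {x}" using y unfolding N_def by blast
      have "f = x \<or> f = y'" using f xx unfolding N_def by blast
      then show False
      proof
        assume "f = x"
        then have "insert f (N x y - {y}) = X" using e1 x by blast
        then show False using fB X by simp
      next
        assume "f = y'"
        then have "insert f (N x y - {y}) = N x y'" using e1 unfolding N_def by simp
        then show False using fB b3 sub1 by auto
      qed
    qed
    have nonempty: "\<exists>y\<in>Y - X. N x y \<in> \<B>" if "x \<in> X - Y" for x
      using exch[OF mB XB YB that] unfolding N_def by blast
    have allS: "N x y' \<in> \<B>" if x: "x \<in> X - Y" and x': "x' \<in> X - Y" and y': "y' \<in> Y - X"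
      and b: "N x' y' \<in> \<B>" for x x' y'
    proof (cases "x = x'")
      case True then show ?thesis using b by simp
    next
      case False
      obtain y where y: "y \<in> Y - X" "N x y \<in> \<B>" using nonempty[OF x] by blast
      show ?thesis
      proof (cases "y = y'")
        case True then show ?thesis using y by simp
      next
        case False
        show ?thesis using noconf[OF x x' \<open>x \<noteq> x'\<close> y(1) y' False y(2) b] by blast
      qed
    qed
    obtain x0 where x0: "x0 \<in> X - Y" using Dne by blast
    obtain y0 where y0: "y0 \<in> Y - X" "N x0 y0 \<in> \<B>" using nonempty[OF x0] by blast
    obtain z where z: "z \<in> X - Y" and WB: "insert z (Y - {y0}) \<in> \<B>"
      using exch[OF mB YB XB y0(1)] by blast
    have "(X - Y) - {z} \<noteq> {}"
    proof
      assume "(X - Y) - {z} = {}"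
      then have "X - Y \<subseteq> {z}" by blast
      then have "card (X - Y) \<le> card {z}" by (intro card_mono) auto
      then have "card (X - Y) \<le> 1" by simp
      then show False using D2 by simp
    qed
    then obtain x' where x': "x' \<in> X - Y" "x' \<noteq> z" by blast
    have "x' \<in> X - insert z (Y - {y0})" using x' by blast
    from exch[OF mB XB WB this] obtain w where w: "w \<in> insert z (Y - {y0}) - X"
      and wB: "insert w (X - {x'}) \<in> \<B>" by blast
    have wE: "w \<in> Y - X" "w \<noteq> y0" using w z by auto
    have "\<forall>x\<in>X - Y. insert y0 (X - {x}) \<in> \<B> \<and> insert w (X - {x}) \<in> \<B>"
    proof
      fix x assume xD: "x \<in> X - Y"
      have "N x y0 \<in> \<B>" using allS[OF xD x0 y0(1) y0(2)] .
      moreover have "N x w \<in> \<B>" using allS[OF xD x'(1) wE(1)] wB unfolding N_def by blast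
      ultimately show "insert y0 (X - {x}) \<in> \<B> \<and> insert w (X - {x}) \<in> \<B>" unfolding N_def by blast
    qed
    then show False using LA[OF Bdef XB YB y0(1) wE(1)] wE(2) by auto
  qed
qed

end
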